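(* Let $Q$ be a sequence, $G=(V,E,\delta)$ a pangenome graph, and $\mathcal{M}$ a finite set of maximal exact matches (MEMs) between $Q$ and $G$. Let $H_{MEM}$ be the vertex-weighted directed graph with vertex set $\{v^m: m\in\mathcal{M}\}$, an edge from $v^m$ to $v^{m'}$ if and only if $m\prec m'$ (for $m,m'\in\mathcal{M}$), and vertex weights $W(v^m)=|m_1|$. If $v^{m^1},\dots,v^{m^k}$ is a directed path in $H_{MEM}$ maximizing the sum of vertex weights among all directed paths in $H_{MEM}$, then $\mathcal{M}'=\{m^1,\dots,m^k\}$ is a strictly ordered subset of $\mathcal{M}$ and $len(\mathcal{M}')$ is maximum among all strictly ordered subsets of $\mathcal{M}$.
   Context: Strings are 0-indexed; $S_i$ is the character of $S$ at position $i$ and $S[i,\dots,j]$ the substring from $i$ to $j$ inclusive. A pangenome graph is a triple $G=(V,E,\delta)$ where $(V,E)$ is a finite directed graph and $\delta:V\to\Sigma^*\setminus\{\epsilon\}$ assigns a nonempty string to each vertex. A path in $G$ is a sequence of vertices $w_0,\dots,w_k$ with $(w_j,w_{j+1})\in E$ for all $j<k$; $u$ reaches $v$ if there is a path from $u$ to $v$. A match (seed) between $Q$ and $G$ is a triple $m=(v,[i,\dots,i'],[j,\dots,j'])$ with $v\in V$ and $\delta(v)[i,\dots,i']=Q[j,\dots,j']$; write $m_0=v$, $m_1=[i,\dots,i']$, $m_2=[j,\dots,j']$, and $|m_1|=i'-i+1=|m_2|$. It is left-maximal if $i=0$ or $j=0$ or $\delta(v)_{i-1}\ne Q_{j-1}$,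 right-maximal if $i'=|\delta(v)|-1$ or $j'=|Q|-1$ or $\delta(v)_{i'+1}\ne Q_{j'+1}$, and a MEM if both. For seeds $s=(v_1,[i_1,\dots,i_1'],[j_1,\dots,j_1'])$ and $t=(v_2,[i_2,\dots,i_2'],[j_2,\dots,j_2'])$, $s\prec t$ (strictly ordered) means $j_1'<j_2$ and: if $v_1=v_2$ then $i_1'<i_2$; if $v_1\ne v_2$ then $v_1$ reaches $v_2$ in $G$. A subset $\mathcal{M}'$ of seeds is strictly ordered if its elements can be listed as $m^1,\dots,m^k$ with $m^l\prec m^{l+1}$ for all $1\le l<k$. $len(\mathcal{M}')=\sum_{m\in\mathcal{M}'}|m_1|$. *)

theory Defs
  imports Main
begin

definition pangenome_graph :: "'v set \<Rightarrow> ('v \<times> 'v) set \<Rightarrow> ('v \<Rightarrow> 'a list) \<Rightarrow> bool" where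
  "pangenome_graph V E \<delta> \<longleftrightarrow> finite V \<and> E \<subseteq> V \<times> V \<and> (\<forall>v\<in>V. \<delta> v \<noteq> [])"

definition dpath :: "('u \<times> 'u) set \<Rightarrow> 'u list \<Rightarrow> bool" where
  "dpath E ws \<longleftrightarrow> ws \<noteq> [] \<and> (\<forall>j. Suc j < length ws \<longrightarrow> (ws ! j, ws ! Suc j) \<in> E)"

definition reaches :: "('v \<times> 'v) set \<Rightarrow> 'v \<Rightarrow> 'v \<Rightarrow> bool" where
  "reaches E u v \<longleftrightarrow> (\<exists>ws. dpath E ws \<and> hd ws = u \<and> last ws = v)"

type_synonym 'v seed = "'v \<times> (nat \<times> nat) \<times> (nat \<times> nat)"

definition is_match :: "'v set \<Rightarrow> ('v \<Rightarrow> 'a list) \<Rightarrow> 'a list \<Rightarrow> 'v seed \<Rightarrow> bool" where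
  "is_match V \<delta> Q m \<longleftrightarrow> (case m of (v, (i, i'), (j, j')) \<Rightarrow>
     v \<in> V \<and> i \<le> i' \<and> j \<le> j' \<and> i' < length (\<delta> v) \<and> j' < length Q \<and> i' - i = j' - j \<and>
     (\<forall>t\<le>i' - i. \<delta> v ! (i + t) = Q ! (j + t)))"

definition left_maximal :: "('v \<Rightarrow> 'a list) \<Rightarrow> 'a list \<Rightarrow> 'v seed \<Rightarrow> bool" where
  "left_maximal \<delta> Q m \<longleftrightarrow> (case m of (v, (i, i'), (j, j')) \<Rightarrow>
     i = 0 \<or> j = 0 \<or> \<delta> v ! (i - 1) \<noteq> Q ! (j - 1))"

definition right_maximal :: "('v \<Rightarrow> 'a list) \<Rightarrow> 'a list \<Rightarrow> 'v seed \<Rightarrow> bool" where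
  "right_maximal \<delta> Q m \<longleftrightarrow> (case m of (v, (i, i'), (j, j')) \<Rightarrow>
     i' = length (\<delta> v) - 1 \<or> j' = length Q - 1 \<or> \<delta> v ! (i' + 1) \<noteq> Q ! (j' + 1))"

definition is_MEM :: "'v set \<Rightarrow> ('v \<Rightarrow> 'a list) \<Rightarrow> 'a list \<Rightarrow> 'v seed \<Rightarrow> bool" where
  "is_MEM V \<delta> Q m \<longleftrightarrow> is_match V \<delta> Q m \<and> left_maximal \<delta> Q m \<and> right_maximal \<delta> Q m"

definition seed_len :: "'v seed \<Rightarrow> nat" where
  "seed_len m = (case m of (v, (i, i'), (j, j')) \<Rightarrow> i' - i + 1)"

definition prec :: "('v \<times> 'v) set \<Rightarrow> 'v seed \<Rightarrow> 'v seed \<Rightarrow> bool" where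
  "prec E s t \<longleftrightarrow> (case s of (v1, (i1, i1'), (j1, j1')) \<Rightarrow> case t of (v2, (i2, i2'), (j2, j2')) \<Rightarrow>
     j1' < j2 \<and> (if v1 = v2 then i1' < i2 else reaches E v1 v2))"

definition strictly_ordered :: "('v \<times> 'v) set \<Rightarrow> 'v seed set \<Rightarrow> bool" where
  "strictly_ordered E S \<longleftrightarrow> (\<exists>ms. distinct ms \<and> set ms = S \<and>
     (\<forall>l. Suc l < length ms \<longrightarrow> prec E (ms ! l) (ms ! Suc l)))"

definition len_seeds :: "'v seed set \<Rightarrow> nat" where
  "len_seeds S = (\<Sum>m\<in>S. seed_len m)"

(* H_MEM: vertices = M (v^m identified with m), edges m \<rightarrow> m' iff m \<prec> m', weights seed_len *)
definition H_MEM_edges :: "('v \<times> 'v) set \<Rightarrow> 'v seed set \<Rightarrow> ('v seed \<times> 'v seed) set" where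
  "H_MEM_edges E M = {(m, m'). m \<in> M \<and> m' \<in> M \<and> prec E m m'}"

definition H_MEM_path :: "('v \<times> 'v) set \<Rightarrow> 'v seed set \<Rightarrow> 'v seed list \<Rightarrow> bool" where
  "H_MEM_path E M ps \<longleftrightarrow> set ps \<subseteq> M \<and> dpath (H_MEM_edges E M) ps"

definition path_weight :: "'v seed list \<Rightarrow> nat" where
  "path_weight ps = sum_list (map seed_len ps)"

end

theory Submission
  imports Defs
begin

lemma prec_end: "is_match V \<delta> Q t \<Longrightarrow> prec E s t \<Longrightarrow> snd (snd (snd s)) < snd (snd (snd t))"
  unfolding prec_def is_match_def by (auto split: prod.splits if_splits)

lemma chain_distinct:
  assumes "set ms \<subseteq> M" "\<forall>m\<in>M. is_match V \<delta> Q m"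
    and "\<forall>l. Suc l < length ms \<longrightarrow> prec E (ms ! l) (ms ! Suc l)"
  shows "distinct ms"
proof -
  let ?f = "\<lambda>m::'v seed. snd (snd (snd m))"
  have "\<forall>i. Suc i < length (map ?f ms) \<longrightarrow> (map ?f ms ! i) < (map ?f ms ! Suc i)"
  proof (intro allI impI)
    fix i assume i: "Suc i < length (map ?f ms)"
    hence "ms ! Suc i \<in> M" using assms(1) by (auto intro: nth_mem)
    thus "(map ?f ms ! i) < (map ?f ms ! Suc i)"
      using i assms prec_end by fastforce
  qed
  hence "sorted_wrt (<) (map ?f ms)"
    by (subst sorted_wrt_iff_nth_Suc_transp) (auto simp: transp_def)
  hence "distinct (map ?f ms)" using strict_sorted_iff by blast
  thus ?thesis using distinct_map by blast
qed

theorem theorem4: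
  fixes Q :: "'a list" and V :: "'v set" and E :: "('v \<times> 'v) set" and \<delta> :: "'v \<Rightarrow> 'a list"
    and M :: "'v seed set" and ms :: "'v seed list"
  assumes "pangenome_graph V E \<delta>"
    and "finite M"
    and "\<forall>m\<in>M. is_MEM V \<delta> Q m"
    and "H_MEM_path E M ms"
    and "\<forall>ps. H_MEM_path E M ps \<longrightarrow> path_weight ps \<le> path_weight ms"
  shows "set ms \<subseteq> M \<and> strictly_ordered E (set ms)
    \<and> (\<forall>S. S \<subseteq> M \<and> strictly_ordered E S \<longrightarrow> len_seeds S \<le> len_seeds (set ms))"
proof -
  have mt: "\<forall>m\<in>M. is_match V \<delta> Q m" using assms(3) is_MEM_def by blast
  have sub: "set ms \<subseteq> M" using assms(4) H_MEM_path_def by blast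
  have ch: "\<forall>l. Suc l < length ms \<longrightarrow> prec E (ms ! l) (ms ! Suc l)"
    using assms(4) unfolding H_MEM_path_def dpath_def H_MEM_edges_def by blast
  have dms: "distinct ms" using chain_distinct[OF sub mt ch] .
  have so: "strictly_ordered E (set ms)" unfolding strictly_ordered_def using dms ch by blast
  have pw: "path_weight ms = len_seeds (set ms)"
    unfolding path_weight_def len_seeds_def using dms by (simp add: sum_list_distinct_conv_sum_set)
  have "len_seeds S \<le> len_seeds (set ms)" if S: "S \<subseteq> M" "strictly_ordered E S" for S
  proof (cases "S = {}")
    case True thus ?thesis by (simp add: len_seeds_def)
  next
    case False
    from S(2) obtain ls where ls: "distinct ls" "set ls = S"
      "\<forall>l. Suc l < length ls \<longrightarrow> prec E (ls ! l) (ls ! Suc l)"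
      unfolding strictly_ordered_def by blast
    have "ls \<noteq> []" using False ls(2) by auto
    have "H_MEM_path E M ls"
      unfolding H_MEM_path_def dpath_def H_MEM_edges_def
    proof (intro conjI allI impI)
      show "set ls \<subseteq> M" using ls(2) S(1) by simp
      show "ls \<noteq> []" by fact
      fix j assume j: "Suc j < length ls"
      have "ls ! j \<in> M" "ls ! Suc j \<in> M" using j ls(2) S(1) by (auto intro!: nth_mem)
      thus "(ls ! j, ls ! Suc j) \<in> {(m, m'). m \<in> M \<and> m' \<in> M \<and> prec E m m'}"
        using ls(3) j by auto
    qed
    hence "path_weight ls \<le> path_weight ms" using assms(5) by blast
    moreover have "path_weight ls = len_seeds S"
      unfolding path_weight_def len_seeds_def using ls by (simp add: sum_list_distinct_conv_sum_set)
    ultimately show ?thesis using pw by simp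
  qed
  thus ?thesis using sub so by blast
qed

end
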